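(* Let $q\in(0,1]$. Consider the parametric convex semi-infinite problem described in the context and let $((\bar c,\bar b),\bar x)\in\operatorname{gph}\mathcal{S}$. Then the following are equivalent: (i) $\mathcal{L}$ is $q$-order calm at $((f(\bar x)+\langle\bar c,\bar x\rangle,\bar b),\bar x)\in\operatorname{gph}\mathcal{L}$; (ii) $\liminf_{x\to\bar x,\ \bar f(x)\downarrow0}\bar f(x)^{q-1}d(0,\partial\bar f(x))>0$.
   Context: Setting: $T$ is a compact subset of a metric space $Z$ with $T\neq Z$; $f:\mathbb{R}^n\to\mathbb{R}$ and $g_t:\mathbb{R}^n\to\mathbb{R}$ ($t\in T$) are convex, with $(t,x)\mapsto g_t(x)$ continuous on $T\times\mathbb{R}^n$. $\mathcal{C}(T,\mathbb{R})$ is the space of continuous $b:T\to\mathbb{R}$, $t\mapsto b_t$, with $\|b\|_\infty=\max_t|b_t|$. For $(c,b)\in\mathbb{R}^n\times\mathcal{C}(T,\mathbb{R})$, $P(c,b)$: minimize $f(x)+\langle c,x\rangle$ subject to $g_t(x)\le b_t$, $t\in T$; $\mathcal{S}(c,b)$ is its optimal solution set. $\mathcal{L}:\mathbb{R}\times\mathcal{C}(T,\mathbb{R})\rightrightarrows\mathbb{R}^n$, $\mathcal{L}(\alpha,b)=\{x: f(x)+\langle\bar c,x\rangle\le\alpha,\ g_t(x)\le b_t,\ t\in T\}$, with $\mathbb{R}\times\mathcal{C}(T,\mathbb{R})$ normed by $\max\{|\alpha|,\|b\|_\infty\}$. $\bar f(x):=\sup\{f(x)-f(\bar x)+\langle\bar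 c,x-\bar x\rangle;\ g_t(x)-\bar b_t,\ t\in T\}$. $\partial$ is the convex subdifferential, $d(0,A)=\inf_{a\in A}\|a\|$ (Euclidean). The liminf over "$\bar f(x)\downarrow0$" is over $x$ with $\bar f(x)>0$. A set-valued $S:Y\rightrightarrows X$ between metric spaces is $q$-order calm at $(\bar y,\bar x)\in\operatorname{gph}S$ if there exist $\tau>0$ and neighbourhoods $U$ of $\bar x$, $V$ of $\bar y$ with $\tau\,d(x,S(\bar y))\le d(y,\bar y)^q$ for all $y\in V$, $x\in S(y)\cap U$. *)

theory Defs
  imports "HOL-Analysis.Analysis"
begin

definition supnorm :: "'z set \<Rightarrow> ('z \<Rightarrow> real) \<Rightarrow> real" where
  "supnorm T b = Sup (insert 0 ((\<lambda>t. \<bar>b t\<bar>) ` T))"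

definition param_space :: "'z::topological_space set \<Rightarrow> (real \<times> ('z \<Rightarrow> real)) set" where
  "param_space T = {(\<alpha>, b). continuous_on T b}"

definition param_dist :: "'z set \<Rightarrow> real \<times> ('z \<Rightarrow> real) \<Rightarrow> real \<times> ('z \<Rightarrow> real) \<Rightarrow> real" where
  "param_dist T y y' = max \<bar>fst y - fst y'\<bar> (supnorm T (\<lambda>t. snd y t - snd y' t))"

definition feasible :: "'z set \<Rightarrow> ('z \<Rightarrow> 'a \<Rightarrow> real) \<Rightarrow> ('z \<Rightarrow> real) \<Rightarrow> 'a set" where
  "feasible T g b = {x. \<forall>t\<in>T. g t x \<le> b t}"

definition optsol :: "'z set \<Rightarrow> ('a::real_inner \<Rightarrow> real) \<Rightarrow> ('z \<Rightarrow> 'a \<Rightarrow> real)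
    \<Rightarrow> 'a \<Rightarrow> ('z \<Rightarrow> real) \<Rightarrow> 'a set" where
  "optsol T f g c b = {x \<in> feasible T g b.
      \<forall>y\<in>feasible T g b. f x + inner c x \<le> f y + inner c y}"

definition levelmap :: "'z set \<Rightarrow> ('a::real_inner \<Rightarrow> real) \<Rightarrow> ('z \<Rightarrow> 'a \<Rightarrow> real)
    \<Rightarrow> 'a \<Rightarrow> real \<times> ('z \<Rightarrow> real) \<Rightarrow> 'a set" where
  "levelmap T f g c y = {x. f x + inner c x \<le> fst y \<and> (\<forall>t\<in>T. g t x \<le> snd y t)}"

definition q_order_calm :: "'y set \<Rightarrow> ('y \<Rightarrow> 'y \<Rightarrow> real) \<Rightarrow> ('y \<Rightarrow> 'x::metric_space set)
    \<Rightarrow> 'y \<Rightarrow> 'x \<Rightarrow> real \<Rightarrow> bool" where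
  "q_order_calm Y dY S ybar xbar q \<longleftrightarrow>
     (\<exists>\<tau>>0. \<exists>\<epsilon>>0. \<exists>\<delta>>0. \<forall>y\<in>Y. dY y ybar < \<delta> \<longrightarrow>
        (\<forall>x\<in>S y. dist x xbar < \<epsilon> \<longrightarrow> \<tau> * infdist x (S ybar) \<le> (dY y ybar) powr q))"

definition fbar :: "'z set \<Rightarrow> ('a::real_inner \<Rightarrow> real) \<Rightarrow> ('z \<Rightarrow> 'a \<Rightarrow> real)
    \<Rightarrow> 'a \<Rightarrow> ('z \<Rightarrow> real) \<Rightarrow> 'a \<Rightarrow> 'a \<Rightarrow> real" where
  "fbar T f g c b xbar x = Sup (insert (f x - f xbar + inner c (x - xbar))
                                  ((\<lambda>t. g t x - b t) ` T))"

definition subdiff :: "('a::real_inner \<Rightarrow> real) \<Rightarrow> 'a \<Rightarrow> 'a set" where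
  "subdiff h x = {v. \<forall>y. h y \<ge> h x + inner v (y - x)}"

end

theory Submission
  imports Defs
begin


lemma sep_sub:
  fixes h :: "'a::euclidean_space \<Rightarrow> real"
  assumes conv: "convex_on UNIV h" and cB: "convex B" and yB: "(y, h y) \<in> B"
    and Bb: "\<forall>p\<in>B. snd p \<le> h (fst p)"
  shows "\<exists>v. (\<forall>z. h y + inner v (z - y) \<le> h z) \<and> (\<forall>p\<in>B. snd p \<le> h y + inner v (fst p - y))"
proof -
  define A where "A = {p. h (fst p) < snd p}"
  have cA: "convex A"
    unfolding A_def convex_def
  proof (clarify)
    fix z1 t1 z2 t2 and u v :: real
    assume "h (fst (z1, t1)) < snd (z1, t1)" "h (fst (z2, t2)) < snd (z2, t2)" "0 \<le> u" "0 \<le> v" "u + v = 1"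
    hence h1: "h z1 < t1" "h z2 < t2" "0 \<le> u" "0 \<le> v" "u + v = 1" by auto
    have "h (u *\<^sub>R z1 + v *\<^sub>R z2) \<le> u * h z1 + v * h z2"
      using conv h1 unfolding convex_on_def by auto
    also have "\<dots> < u * t1 + v * t2"
    proof (cases "u = 0")
      case True then show ?thesis using h1 by auto
    next
      case False
      then have "u * h z1 < u * t1" using h1 by auto
      moreover have "v * h z2 \<le> v * t2" using h1 by (simp add: mult_left_mono)
      ultimately show ?thesis by linarith
    qed
    finally show "h (fst (u *\<^sub>R (z1, t1) + v *\<^sub>R (z2, t2))) < snd (u *\<^sub>R (z1, t1) + v *\<^sub>R (z2, t2))"
      by simp
  qed
  have "(y, h y + 1) \<in> A" unfolding A_def by simp
  hence Ane: "A \<noteq> {}" by blast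
  have Bne: "B \<noteq> {}" using yB by auto
  have dis: "B \<inter> A = {}" using Bb unfolding A_def by force
  obtain a b where ab: "a \<noteq> 0" "\<forall>x\<in>B. inner a x \<le> b" "\<forall>x\<in>A. inner a x \<ge> b"
    using separating_hyperplane_sets[OF cB cA Bne Ane dis] by blast
  obtain a1 \<beta> where a: "a = (a1, \<beta>)" by (cases a)
  have hA: "b \<le> inner a1 z + \<beta> * t" if "h z < t" for z t
    using ab(3) that unfolding A_def a by auto
  have hB: "inner a1 z + \<beta> * t \<le> b" if "(z, t) \<in> B" for z t
    using ab(2) that unfolding a by auto
  have hy: "inner a1 y + \<beta> * h y \<le> b" using hB[OF yB] .
  have "b \<le> inner a1 y + \<beta> * (h y + 1)" using hA[of y "h y + 1"] by simp
  hence bge: "\<beta> \<ge> 0" using hy by (simp add: algebra_simps)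
  have "\<beta> \<noteq> 0"
  proof
    assume b0: "\<beta> = 0"
    have "b \<le> inner a1 (y - a1)" using hA[of "y - a1" "h (y - a1) + 1"] b0 by simp
    hence "inner a1 a1 \<le> 0" using hy b0 by (simp add: inner_diff_right)
    hence "a1 = 0" by (metis inner_ge_zero inner_eq_zero_iff order_antisym)
    thus False using ab(1) a b0 by (simp add: zero_prod_def)
  qed
  hence bpos: "\<beta> > 0" using bge by simp
  have hAc: "b \<le> inner a1 z + \<beta> * h z" for z
  proof (rule field_le_epsilon)
    fix e :: real assume "0 < e"
    have "b \<le> inner a1 z + \<beta> * (h z + e / \<beta>)" using hA[of z "h z + e/\<beta>"] \<open>0<e\<close> bpos by simp
    thus "b \<le> inner a1 z + \<beta> * h z + e" using bpos by (simp add: algebra_simps)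
  qed
  define v where "v = (- (1 / \<beta>)) *\<^sub>R a1"
  have iv: "\<beta> * inner v w = - inner a1 w" for w using bpos unfolding v_def by simp
  show ?thesis
  proof (intro exI[of _ v] conjI allI ballI)
    fix z
    have "\<beta> * (h y + inner v (z - y)) \<le> \<beta> * h z"
      using hAc[of z] hy iv[of "z - y"] by (simp add: algebra_simps inner_diff_right)
    thus "h y + inner v (z - y) \<le> h z" using bpos by simp
  next
    fix p assume "p \<in> B"
    obtain z t where p: "p = (z, t)" by (cases p)
    have "\<beta> * t \<le> \<beta> * (h y + inner v (z - y))"
      using hB[of z t] \<open>p \<in> B\<close> p hAc[of y] iv[of "z - y"] by (simp add: algebra_simps inner_diff_right)
    thus "snd p \<le> h y + inner v (fst p - y)" using bpos p by simp
  qed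
qed

lemma subdiff_nonempty:
  fixes h :: "'a::euclidean_space \<Rightarrow> real"
  assumes conv: "convex_on UNIV h"
  shows "subdiff h y \<noteq> {}"
proof -
  obtain v where "\<forall>z. h y + inner v (z - y) \<le> h z"
    using sep_sub[OF conv convex_singleton[of "(y, h y)"]] by auto
  hence "v \<in> subdiff h y" unfolding subdiff_def by auto
  thus ?thesis by blast
qed

lemma small_subgrad:
  fixes h :: "'a::euclidean_space \<Rightarrow> real"
  assumes conv: "convex_on UNIV h" and lamnn: "0 \<le> lam"
    and mn: "\<forall>z. h y - lam * norm (z - y) \<le> h z"
  shows "\<exists>v\<in>subdiff h y. norm v \<le> lam"
proof -
  define B where "B = {p. snd p \<le> h y - lam * norm (fst p - y)}"
  have cB: "convex B"
    unfolding B_def convex_def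
  proof (clarify)
    fix z1 t1 z2 t2 and u v :: real
    assume "snd (z1, t1) \<le> h y - lam * norm (fst (z1, t1) - y)" "snd (z2, t2) \<le> h y - lam * norm (fst (z2, t2) - y)" "0 \<le> u" "0 \<le> v" "u + v = 1"
    hence h1: "t1 \<le> h y - lam * norm (z1 - y)" "t2 \<le> h y - lam * norm (z2 - y)" "0 \<le> u" "0 \<le> v" "u + v = 1" by auto
    have eq: "u *\<^sub>R z1 + v *\<^sub>R z2 - y = u *\<^sub>R (z1 - y) + v *\<^sub>R (z2 - y)"
    proof -
      have "y = u *\<^sub>R y + v *\<^sub>R y" using h1(5) by (metis scaleR_add_left scaleR_one)
      thus ?thesis by (simp add: algebra_simps)
    qed
    have "norm (u *\<^sub>R z1 + v *\<^sub>R z2 - y) \<le> u * norm (z1 - y) + v * norm (z2 - y)"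
      unfolding eq using h1 norm_triangle_ineq[of "u *\<^sub>R (z1 - y)" "v *\<^sub>R (z2 - y)"] by simp
    hence "lam * norm (u *\<^sub>R z1 + v *\<^sub>R z2 - y) \<le> lam * (u * norm (z1 - y) + v * norm (z2 - y))"
      using lamnn by (simp add: mult_left_mono)
    moreover have "u * t1 \<le> u * (h y - lam * norm (z1 - y))" using h1 by (simp add: mult_left_mono)
    moreover have "v * t2 \<le> v * (h y - lam * norm (z2 - y))" using h1 by (simp add: mult_left_mono)
    ultimately have "u * t1 + v * t2 \<le> (u + v) * h y - lam * norm (u *\<^sub>R z1 + v *\<^sub>R z2 - y)"
      by (simp add: algebra_simps)
    thus "snd (u *\<^sub>R (z1, t1) + v *\<^sub>R (z2, t2)) \<le> h y - lam * norm (fst (u *\<^sub>R (z1, t1) + v *\<^sub>R (z2, t2)) - y)"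
      using h1(5) by simp
  qed
  have yB: "(y, h y) \<in> B" unfolding B_def by simp
  have Bb: "\<forall>p\<in>B. snd p \<le> h (fst p)" unfolding B_def using mn by (auto intro: order_trans)
  obtain v where v: "\<forall>z. h y + inner v (z - y) \<le> h z" "\<forall>p\<in>B. snd p \<le> h y + inner v (fst p - y)"
    using sep_sub[OF conv cB yB Bb] by blast
  have "(y - v, h y - lam * norm v) \<in> B" unfolding B_def by simp
  hence "h y - lam * norm v \<le> h y + inner v (- v)" using v(2) by force
  hence "norm v * norm v \<le> lam * norm v" by (simp add: power2_norm_eq_inner[symmetric] power2_eq_square)
  hence "norm v \<le> lam"
  proof (cases "v = 0")
    case True thus ?thesis using lamnn by simp
  next
    case False hence "norm v > 0" by simp
    thus ?thesis using \<open>norm v * norm v \<le> lam * norm v\<close> by (simp add: mult_le_cancel_right)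
  qed
  moreover have "v \<in> subdiff h y" using v(1) unfolding subdiff_def by auto
  ultimately show ?thesis by blast
qed



lemma one_step:
  fixes h :: "'a::euclidean_space \<Rightarrow> real"
  assumes conv: "convex_on UNIV h" and cont: "continuous_on UNIV h" and hnn: "\<And>x. h x \<ge> 0"
    and q: "0 < q" "q \<le> 1" and m: "m > 0"
    and slope: "\<And>x v. 0 < h x \<Longrightarrow> dist x xbar < \<delta> \<Longrightarrow> v \<in> subdiff h x \<Longrightarrow> m * h x powr (1 - q) < norm v"
    and r: "r > 0" and hw: "h w \<le> 2 * r"
    and near: "\<And>y. dist y w \<le> 4 * r powr q / m \<Longrightarrow> dist y xbar < \<delta>"
  shows "\<exists>y. h y \<le> r \<and> dist y w \<le> 4 * r powr q / m"
proof -
  define lam where "lam = m / 2 * r powr (1 - q)"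
  have lam: "lam > 0" using m r unfolding lam_def by simp
  define \<psi> where "\<psi> z = h z + lam * dist z w" for z
  define R where "R = h w / lam"
  have cpsi: "continuous_on (cball w R) \<psi>"
    unfolding \<psi>_def by (intro continuous_intros continuous_on_subset[OF cont]) auto
  have Rnn: "R \<ge> 0" using hnn lam unfolding R_def by simp
  obtain y where y: "y \<in> cball w R" "\<And>z. z \<in> cball w R \<Longrightarrow> \<psi> y \<le> \<psi> z"
    using continuous_attains_inf[OF compact_cball _ cpsi] Rnn by auto
  have glob: "\<psi> y \<le> \<psi> z" for z
  proof (cases "z \<in> cball w R")
    case True thus ?thesis using y by auto
  next
    case False
    hence "dist w z > R" by simp
    hence "h w < dist z w * lam" using lam unfolding R_def by (simp add: dist_commute pos_divide_less_eq)
    hence "lam * dist z w > h w" by (simp add: mult.commute)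
    moreover have "\<psi> y \<le> \<psi> w" using y(2)[of w] Rnn by simp
    moreover have "\<psi> w = h w" unfolding \<psi>_def by simp
    moreover have "\<psi> z \<ge> lam * dist z w" unfolding \<psi>_def using hnn[of z] by simp
    ultimately show ?thesis by linarith
  qed
  have rr: "r powr (1 - q) = r / r powr q" using r by (simp add: powr_diff)
  have "dist y w \<le> R" using y(1) by (simp add: dist_commute)
  also have "R \<le> 2 * r / lam" unfolding R_def using hw lam by (simp add: divide_right_mono)
  also have "2 * r / lam = 4 * r powr q / m" unfolding lam_def rr using r m by (simp add: field_simps)
  finally have dy: "dist y w \<le> 4 * r powr q / m" .
  have "h y \<le> r"
  proof (rule ccontr)
    assume "\<not> h y \<le> r"
    hence hy: "h y > r" by simp
    have "\<forall>z. h y - lam * norm (z - y) \<le> h z"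
    proof
      fix z
      have "\<psi> y \<le> \<psi> z" by (rule glob)
      moreover have "dist z w \<le> dist z y + dist y w" by (rule dist_triangle)
      hence "lam * dist z w \<le> lam * dist z y + lam * dist y w" using lam
        by (metis distrib_left less_imp_le mult_left_mono)
      ultimately show "h y - lam * norm (z - y) \<le> h z"
        unfolding \<psi>_def by (simp add: dist_norm)
    qed
    then obtain v where v: "v \<in> subdiff h y" "norm v \<le> lam"
      using small_subgrad[OF conv] lam by (meson less_imp_le)
    have "m * h y powr (1 - q) < norm v" using slope[OF _ near[OF dy] v(1)] hy r by simp
    moreover have "r powr (1 - q) \<le> h y powr (1 - q)" using powr_mono2[of "1 - q" r "h y"] q r hy by simp
    hence "m * r powr (1 - q) \<le> m * h y powr (1 - q)" using m by simp
    ultimately have "m * r powr (1 - q) < lam" using v(2) by linarith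
    thus False unfolding lam_def using m r by simp
  qed
  thus ?thesis using dy by blast
qed



lemma slope_of_EB:
  fixes h :: "'a::euclidean_space \<Rightarrow> real"
  assumes conv: "convex_on UNIV h" and hnn: "\<And>x. h x \<ge> 0" and h0: "h xbar = 0"
    and q: "0 < q" "q \<le> 1" and tau: "\<tau> > 0" and eps: "\<epsilon> > 0"
    and EB: "\<And>x. dist x xbar < \<epsilon> \<Longrightarrow> 0 < h x \<Longrightarrow> \<tau> * infdist x {x. h x \<le> 0} \<le> h x powr q"
  shows "Liminf (at xbar within {x. h x > 0}) (\<lambda>x. ereal (h x powr (q - 1) * infdist 0 (subdiff h x))) > 0"
proof -
  let ?S = "{x. h x \<le> 0}"
  have key: "\<tau> \<le> h x powr (q - 1) * infdist 0 (subdiff h x)" if x: "dist x xbar < \<epsilon>" "0 < h x" for x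
  proof -
    define s where "s = h x"
    have s: "s > 0" using x s_def by simp
    have EBx: "\<tau> * infdist x ?S \<le> s powr q" using EB[OF x] s_def by simp
    have Sne: "?S \<noteq> {}" using h0 by (metis (mono_tags) empty_iff mem_Collect_eq order_refl)
    have vb: "\<tau> * s powr (1 - q) \<le> norm v" if v: "v \<in> subdiff h x" for v
    proof -
      have vi: "h x + inner v (z - x) \<le> h z" for z using v unfolding subdiff_def by auto
      have "s \<le> norm v * dist x z" if "z \<in> ?S" for z
      proof -
        have "s + inner v (z - x) \<le> 0" using vi[of z] that s_def by simp
        moreover have "- inner v (z - x) \<le> norm v * norm (z - x)"
          by (metis norm_cauchy_schwarz inner_minus_left norm_minus_cancel)
        ultimately show ?thesis by (simp add: dist_norm norm_minus_commute)
      qed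
      hence nv: "norm v > 0" using h0 s by (metis mem_Collect_eq mult_zero_left norm_eq_zero not_le order_refl zero_less_norm_iff)
      have "s / norm v \<le> infdist x ?S"
        unfolding infdist_notempty[OF Sne]
        by (rule cINF_greatest[OF Sne]) (use nv \<open>\<And>z. z \<in> ?S \<Longrightarrow> s \<le> norm v * dist x z\<close> in \<open>simp add: divide_le_eq mult.commute\<close>)
      hence "\<tau> * (s / norm v) \<le> s powr q" using EBx tau by (meson mult_left_mono less_imp_le order_trans)
      hence "\<tau> * s \<le> norm v * s powr q" using nv by (simp add: field_simps)
      hence "\<tau> * s / s powr q \<le> norm v" using s by (simp add: divide_le_eq mult.commute)
      moreover have "s powr (1 - q) = s / s powr q" using s by (simp add: powr_diff)
      ultimately show ?thesis by simp
    qed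
    have "\<tau> * s powr (1 - q) \<le> infdist 0 (subdiff h x)"
      unfolding infdist_notempty[OF subdiff_nonempty[OF conv]]
      by (rule cINF_greatest[OF subdiff_nonempty[OF conv]]) (use vb in simp)
    hence "s powr (q - 1) * (\<tau> * s powr (1 - q)) \<le> s powr (q - 1) * infdist 0 (subdiff h x)"
      by (simp add: mult_left_mono)
    moreover have "s powr (q - 1) * s powr (1 - q) = 1" using s by (simp flip: powr_add)
    ultimately show ?thesis using s_def by (simp add: algebra_simps)
  qed
  have "eventually (\<lambda>x. ereal \<tau> \<le> ereal (h x powr (q - 1) * infdist 0 (subdiff h x))) (at xbar within {x. h x > 0})"
    unfolding eventually_at using eps key by auto
  hence "ereal \<tau> \<le> Liminf (at xbar within {x. h x > 0}) (\<lambda>x. ereal (h x powr (q - 1) * infdist 0 (subdiff h x)))"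
    by (rule Liminf_bounded)
  thus ?thesis using tau by (meson ereal_less(2) order_less_le_trans)
qed



lemma EB_of_slope:
  fixes h :: "'a::euclidean_space \<Rightarrow> real"
  assumes conv: "convex_on UNIV h" and cont: "continuous_on UNIV h" and hnn: "\<And>x. h x \<ge> 0"
    and h0: "h xbar = 0" and q: "0 < q" "q \<le> 1"
    and Lpos: "Liminf (at xbar within {x. h x > 0}) (\<lambda>x. ereal (h x powr (q - 1) * infdist 0 (subdiff h x))) > 0"
  shows "\<exists>\<tau>>0. \<exists>\<epsilon>>0. \<forall>x. dist x xbar < \<epsilon> \<longrightarrow> \<tau> * infdist x {x. h x \<le> 0} \<le> h x powr q"
proof -
  obtain m where m0: "0 < ereal m" and mL: "ereal m < Liminf (at xbar within {x. h x > 0}) (\<lambda>x. ereal (h x powr (q - 1) * infdist 0 (subdiff h x)))"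
    using ereal_dense2[OF Lpos] by blast
  have m: "m > 0" using m0 by simp
  have "eventually (\<lambda>x. ereal m < ereal (h x powr (q - 1) * infdist 0 (subdiff h x))) (at xbar within {x. h x > 0})"
    using less_LiminfD[OF mL] by simp
  then obtain \<delta> where \<delta>: "\<delta> > 0"
    and \<delta>P: "\<And>x. x \<in> {x. h x > 0} \<Longrightarrow> x \<noteq> xbar \<Longrightarrow> dist x xbar < \<delta> \<Longrightarrow> m < h x powr (q - 1) * infdist 0 (subdiff h x)"
    unfolding eventually_at by auto
  have slope: "m * h x powr (1 - q) < norm v" if x: "0 < h x" "dist x xbar < \<delta>" "v \<in> subdiff h x" for x v
  proof -
    have "x \<noteq> xbar" using x h0 by auto
    hence "m < h x powr (q - 1) * infdist 0 (subdiff h x)" using \<delta>P x by auto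
    also have "\<dots> \<le> h x powr (q - 1) * norm v"
      using infdist_le[OF x(3), of 0] by (simp add: mult_left_mono)
    finally have "h x powr (1 - q) * m < h x powr (1 - q) * (h x powr (q - 1) * norm v)"
      using x(1) by simp
    moreover have "h x powr (1 - q) * h x powr (q - 1) = 1" using x(1) by (simp flip: powr_add)
    ultimately show ?thesis by (simp add: algebra_simps)
  qed
  define \<rho> where "\<rho> = (1/2::real) powr q"
  have \<rho>0: "\<rho> > 0" unfolding \<rho>_def by simp
  have \<rho>1: "\<rho> < 1" unfolding \<rho>_def using powr_less_mono2[OF q(1), of "1/2" 1] by simp
  define C where "C = 4 / m * \<rho> / (1 - \<rho>)"
  have C: "C > 0" unfolding C_def using m \<rho>0 \<rho>1 by simp
  define \<eta> where "\<eta> = (\<delta> / (2 * C)) powr (1 / q)"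
  have \<eta>: "\<eta> > 0" unfolding \<eta>_def using \<delta> C by simp
  have \<eta>q: "\<eta> powr q = \<delta> / (2 * C)" unfolding \<eta>_def using q \<delta> C by (simp add: powr_powr)
  have "isCont h xbar" using cont by (simp add: continuous_on_eq_continuous_at)
  then obtain \<epsilon>1 where \<epsilon>1: "\<epsilon>1 > 0" "\<And>x. dist x xbar < \<epsilon>1 \<Longrightarrow> dist (h x) (h xbar) < \<eta>"
    unfolding continuous_at_eps_delta using \<eta> by blast
  define \<epsilon> where "\<epsilon> = min \<epsilon>1 (\<delta> / 2)"
  have \<epsilon>: "\<epsilon> > 0" unfolding \<epsilon>_def using \<epsilon>1 \<delta> by simp
  have main: "(1 / C) * infdist x {x. h x \<le> 0} \<le> h x powr q" if x: "dist x xbar < \<epsilon>" for x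
  proof (cases "h x \<le> 0")
    case True
    hence "infdist x {x. h x \<le> 0} = 0" by (simp add: infdist_zero)
    thus ?thesis by simp
  next
    case False
    define s where "s = h x"
    have s: "s > 0" using False s_def by simp
    have "s < \<eta>" using \<epsilon>1(2)[of x] x h0 hnn[of x] unfolding \<epsilon>_def s_def by (simp add: dist_real_def)
    hence "s powr q < \<eta> powr q" using powr_less_mono2[OF q(1)] s by simp
    hence sq: "s powr q < \<delta> / (2 * C)" using \<eta>q by simp
    define A where "A = C * s powr q"
    have A: "A > 0" unfolding A_def using C s by simp
    have Aleft: "A + dist x xbar < \<delta>"
    proof -
      have "A < \<delta> / 2" unfolding A_def using sq C by (simp add: field_simps)
      moreover have "dist x xbar < \<delta> / 2" using x unfolding \<epsilon>_def by simp
      ultimately show ?thesis by simp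
    qed
    have rq: "(s * (1/2)^k) powr q = s powr q * \<rho> ^ k" for k
    proof -
      have "(s * (1/2)^k) powr q = s powr q * ((1/2::real)^k) powr q" using s by (simp add: powr_mult)
      also have "((1/2::real)^k) powr q = \<rho> ^ k"
      proof -
        have "((1/2::real)^k) powr q = ((1/2) powr real k) powr q" by (simp add: powr_realpow)
        also have "\<dots> = ((1/2) powr q) powr real k" by (rule powr_powr_swap)
        also have "\<dots> = \<rho> ^ k" unfolding \<rho>_def by (simp add: powr_realpow)
        finally show ?thesis .
      qed
      finally show ?thesis .
    qed
    have iter: "\<exists>z. h z \<le> s * (1/2)^k \<and> dist z x \<le> A * (1 - \<rho> ^ k)" for k
    proof (induction k)
      case 0 thus ?case using s_def by (intro exI[of _ x]) simp
    next
      case (Suc k)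
      then obtain z where z: "h z \<le> s * (1/2)^k" "dist z x \<le> A * (1 - \<rho> ^ k)" by blast
      define r where "r = s * (1/2)^(Suc k)"
      have r: "r > 0" unfolding r_def using s by simp
      have hz: "h z \<le> 2 * r" using z(1) unfolding r_def by simp
      have stp: "4 * r powr q / m = A * (1 - \<rho> ^ Suc k) - A * (1 - \<rho> ^ k)"
      proof -
        have e1: "A * (1 - \<rho> ^ Suc k) - A * (1 - \<rho> ^ k) = A * \<rho> ^ k * (1 - \<rho>)" by (simp add: algebra_simps)
        have n0: "1 - \<rho> \<noteq> 0" using \<rho>1 by simp
        have e2: "A * \<rho> ^ k * (1 - \<rho>) = 4 * (s powr q * \<rho> ^ Suc k) / m"
          unfolding A_def C_def using n0 m by (simp add: field_simps)
        show ?thesis unfolding e1 e2 r_def rq ..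
      qed
      have near: "dist y xbar < \<delta>" if "dist y z \<le> 4 * r powr q / m" for y
      proof -
        have "dist y xbar \<le> dist y z + dist z x + dist x xbar" by (metis dist_triangle add_mono order_trans order_refl)
        also have "\<dots> \<le> A * (1 - \<rho> ^ Suc k) + dist x xbar" using that z(2) stp by simp
        also have "\<dots> \<le> A + dist x xbar" using A \<rho>0 by simp
        finally show ?thesis using Aleft by simp
      qed
      obtain y where y: "h y \<le> r" "dist y z \<le> 4 * r powr q / m"
        using one_step[OF conv cont hnn q m slope r hz near] by blast
      have "dist y x \<le> dist y z + dist z x" by (rule dist_triangle)
      also have "\<dots> \<le> A * (1 - \<rho> ^ Suc k)" using y(2) z(2) stp by simp
      finally show ?case using y(1) unfolding r_def by blast
    qed
    have "\<exists>zs\<in>cball x A. \<forall>y\<in>cball x A. h zs \<le> h y"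
      using continuous_attains_inf[OF compact_cball _ continuous_on_subset[OF cont]] A by auto
    then obtain zs where zs: "zs \<in> cball x A" "\<And>y. y \<in> cball x A \<Longrightarrow> h zs \<le> h y" by blast
    have hzs: "h zs \<le> s * (1/2)^k" for k
    proof -
      obtain z where z: "h z \<le> s * (1/2)^k" "dist z x \<le> A * (1 - \<rho> ^ k)" using iter by blast
      have "A * (1 - \<rho> ^ k) \<le> A" using A \<rho>0 by simp
      hence "z \<in> cball x A" using z(2) by (simp add: dist_commute)
      thus ?thesis using zs(2) z(1) by force
    qed
    have "h zs \<le> 0"
    proof (rule ccontr)
      assume "\<not> h zs \<le> 0"
      hence "h zs / s > 0" using s by simp
      then obtain n where "(1/2::real)^n < h zs / s" using real_arch_pow_inv[of "h zs / s" "1/2"] by auto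
      hence "s * (1/2)^n < h zs" using s by (simp add: field_simps)
      thus False using hzs[of n] by simp
    qed
    hence "infdist x {x. h x \<le> 0} \<le> dist x zs" by (intro infdist_le) simp
    also have "\<dots> \<le> A" using zs(1) by simp
    finally have "infdist x {x. h x \<le> 0} \<le> C * s powr q" unfolding A_def .
    thus ?thesis using C s_def by (simp add: field_simps)
  qed
  show ?thesis using main C \<epsilon> by (metis zero_less_divide_1_iff)
qed



theorem proposition4p3:
  fixes T :: "'z::metric_space set"
    and f :: "'a::euclidean_space \<Rightarrow> real"
    and g :: "'z \<Rightarrow> 'a \<Rightarrow> real"
    and cbar :: 'a and bbar :: "'z \<Rightarrow> real" and xbar :: 'a and q :: real
  assumes "compact T" and "T \<noteq> UNIV"
    and "convex_on UNIV f"
    and "\<And>t. t \<in> T \<Longrightarrow> convex_on UNIV (g t)"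
    and "continuous_on (T \<times> UNIV) (\<lambda>(t, x). g t x)"
    and "0 < q" and "q \<le> 1"
    and "continuous_on T bbar"
    and "xbar \<in> optsol T f g cbar bbar"
  shows "q_order_calm (param_space T) (param_dist T) (levelmap T f g cbar)
            (f xbar + inner cbar xbar, bbar) xbar q
         \<longleftrightarrow>
         Liminf (at xbar within {x. fbar T f g cbar bbar xbar x > 0})
           (\<lambda>x. ereal (fbar T f g cbar bbar xbar x powr (q - 1)
                    * infdist 0 (subdiff (fbar T f g cbar bbar xbar) x))) > 0"
proof -
  note cT = assms(1) and fconv = assms(3) and gconv = assms(4) and gcont = assms(5)
    and q = assms(6,7) and bcont = assms(8) and opt = assms(9)
  define \<phi> where "\<phi> = fbar T f g cbar bbar xbar"
  define F where "F x = f x - f xbar + inner cbar (x - xbar)" for x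
  have bdd: "bdd_above ((\<lambda>t. g t x - bbar t) ` T)" for x
  proof -
    have "continuous_on T (\<lambda>t. (\<lambda>(t, x). g t x) (t, x))"
      by (rule continuous_on_compose2[OF gcont]) (auto intro!: continuous_intros)
    hence "continuous_on T (\<lambda>t. g t x - bbar t)" using bcont by (auto intro!: continuous_intros)
    hence "compact ((\<lambda>t. g t x - bbar t) ` T)" using cT by (rule compact_continuous_image)
    thus ?thesis by (intro bounded_imp_bdd_above compact_imp_bounded)
  qed
  have le: "\<phi> x \<le> M \<longleftrightarrow> F x \<le> M \<and> (\<forall>t\<in>T. g t x - bbar t \<le> M)" for x M
    unfolding \<phi>_def fbar_def F_def by (subst cSup_le_iff) (use bdd in auto)
  have geF: "F x \<le> \<phi> x" and geg: "t \<in> T \<Longrightarrow> g t x - bbar t \<le> \<phi> x" for x t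
    using le[of x "\<phi> x"] by auto
  have feas: "\<forall>t\<in>T. g t xbar \<le> bbar t" and optv: "\<And>x. \<forall>t\<in>T. g t x \<le> bbar t \<Longrightarrow> f xbar + inner cbar xbar \<le> f x + inner cbar x"
    using opt unfolding optsol_def feasible_def by auto
  have Fe: "F x = (f x + inner cbar x) - (f xbar + inner cbar xbar)" for x
    unfolding F_def by (simp add: inner_diff_right)
  have hnn: "\<phi> x \<ge> 0" for x
  proof (cases "\<forall>t\<in>T. g t x \<le> bbar t")
    case True
    hence "F x \<ge> 0" using optv Fe by simp
    thus ?thesis using geF[of x] by simp
  next
    case False
    then obtain t where "t \<in> T" "g t x > bbar t" by auto
    thus ?thesis using geg[of t x] by simp
  qed
  have h0: "\<phi> xbar = 0" using le[of xbar 0] feas hnn[of xbar] unfolding F_def by simp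
  have conv: "convex_on UNIV \<phi>"
    unfolding convex_on_def
  proof (intro conjI convex_UNIV allI impI ballI)
    fix x y and u v :: real
    assume uv: "0 \<le> u" "0 \<le> v" "u + v = 1"
    have v: "v = 1 - u" using uv by simp
    have "F (u *\<^sub>R x + v *\<^sub>R y) \<le> u * F x + v * F y"
    proof -
      have "f (u *\<^sub>R x + v *\<^sub>R y) \<le> u * f x + v * f y" using fconv uv unfolding convex_on_def by auto
      thus ?thesis unfolding F_def v by (simp add: algebra_simps inner_add_right inner_diff_right)
    qed
    also have "\<dots> \<le> u * \<phi> x + v * \<phi> y" using geF[of x] geF[of y] uv by (simp add: add_mono mult_left_mono)
    finally have 1: "F (u *\<^sub>R x + v *\<^sub>R y) \<le> u * \<phi> x + v * \<phi> y" .
    have 2: "g t (u *\<^sub>R x + v *\<^sub>R y) - bbar t \<le> u * \<phi> x + v * \<phi> y" if t: "t \<in> T" for t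
    proof -
      have "g t (u *\<^sub>R x + v *\<^sub>R y) \<le> u * g t x + v * g t y" using gconv[OF t] uv unfolding convex_on_def by auto
      hence "g t (u *\<^sub>R x + v *\<^sub>R y) - bbar t \<le> u * (g t x - bbar t) + v * (g t y - bbar t)"
        unfolding v by (simp add: algebra_simps)
      also have "\<dots> \<le> u * \<phi> x + v * \<phi> y" using geg[OF t, of x] geg[OF t, of y] uv by (simp add: add_mono mult_left_mono)
      finally show ?thesis .
    qed
    show "\<phi> (u *\<^sub>R x + v *\<^sub>R y) \<le> u * \<phi> x + v * \<phi> y" using le 1 2 by blast
  qed
  have cont: "continuous_on UNIV \<phi>" by (rule convex_on_continuous[OF open_UNIV conv])
  define ybar where "ybar = (f xbar + inner cbar xbar, bbar)"
  have Sb: "levelmap T f g cbar ybar = {x. \<phi> x \<le> 0}"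
    unfolding levelmap_def ybar_def using le Fe by auto
  have EB_iff: "q_order_calm (param_space T) (param_dist T) (levelmap T f g cbar) ybar xbar q \<longleftrightarrow>
     (\<exists>\<tau>>0. \<exists>\<epsilon>>0. \<forall>x. dist x xbar < \<epsilon> \<longrightarrow> 0 < \<phi> x \<longrightarrow> \<tau> * infdist x {x. \<phi> x \<le> 0} \<le> \<phi> x powr q)"
  proof
    assume "q_order_calm (param_space T) (param_dist T) (levelmap T f g cbar) ybar xbar q"
    then obtain \<tau> \<epsilon> \<delta> where t: "\<tau> > 0" "\<epsilon> > 0" "\<delta> > 0"
      and calm: "\<And>y x. y \<in> param_space T \<Longrightarrow> param_dist T y ybar < \<delta> \<Longrightarrow> x \<in> levelmap T f g cbar y \<Longrightarrow>
          dist x xbar < \<epsilon> \<Longrightarrow> \<tau> * infdist x (levelmap T f g cbar ybar) \<le> (param_dist T y ybar) powr q"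
      unfolding q_order_calm_def by blast
    have "isCont \<phi> xbar" using cont by (simp add: continuous_on_eq_continuous_at)
    then obtain \<epsilon>1 where \<epsilon>1: "\<epsilon>1 > 0" "\<And>x. dist x xbar < \<epsilon>1 \<Longrightarrow> dist (\<phi> x) (\<phi> xbar) < \<delta>"
      unfolding continuous_at_eps_delta using t(3) by blast
    have EBx: "\<tau> * infdist x {x. \<phi> x \<le> 0} \<le> \<phi> x powr q" if x: "dist x xbar < min \<epsilon> \<epsilon>1" "0 < \<phi> x" for x
    proof -
      define y where "y = (f xbar + inner cbar xbar + \<phi> x, \<lambda>t. bbar t + \<phi> x)"
      have yP: "y \<in> param_space T" unfolding y_def param_space_def using bcont by (auto intro!: continuous_intros)
      have sn: "supnorm T (\<lambda>t. \<phi> x) \<le> \<phi> x"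
        unfolding supnorm_def using x(2) by (intro cSup_least) auto
      have pd: "param_dist T y ybar = \<phi> x"
        unfolding param_dist_def y_def ybar_def using sn x(2) by simp
      have "\<phi> x < \<delta>" using \<epsilon>1(2)[of x] x h0 by (simp add: dist_real_def)
      hence pdl: "param_dist T y ybar < \<delta>" using pd by simp
      have xL: "x \<in> levelmap T f g cbar y"
        unfolding levelmap_def y_def using geF[of x] geg[of _ x] Fe[of x] by force
      show "\<tau> * infdist x {x. \<phi> x \<le> 0} \<le> \<phi> x powr q"
        using calm[OF yP pdl xL] x(1) Sb pd by simp
    qed
    show "\<exists>\<tau>>0. \<exists>\<epsilon>>0. \<forall>x. dist x xbar < \<epsilon> \<longrightarrow> 0 < \<phi> x \<longrightarrow> \<tau> * infdist x {x. \<phi> x \<le> 0} \<le> \<phi> x powr q"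
    proof -
      have m0: "min \<epsilon> \<epsilon>1 > 0" using t \<epsilon>1 by simp
      have "\<forall>x. dist x xbar < min \<epsilon> \<epsilon>1 \<longrightarrow> 0 < \<phi> x \<longrightarrow> \<tau> * infdist x {x. \<phi> x \<le> 0} \<le> \<phi> x powr q"
        using EBx by blast
      thus ?thesis using t(1) m0 by blast
    qed
  next
    assume "\<exists>\<tau>>0. \<exists>\<epsilon>>0. \<forall>x. dist x xbar < \<epsilon> \<longrightarrow> 0 < \<phi> x \<longrightarrow> \<tau> * infdist x {x. \<phi> x \<le> 0} \<le> \<phi> x powr q"
    then obtain \<tau> \<epsilon> where t: "\<tau> > 0" "\<epsilon> > 0"
      and EB: "\<And>x. dist x xbar < \<epsilon> \<Longrightarrow> 0 < \<phi> x \<Longrightarrow> \<tau> * infdist x {x. \<phi> x \<le> 0} \<le> \<phi> x powr q" by blast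
    have key: "\<tau> * infdist x (levelmap T f g cbar ybar) \<le> param_dist T y ybar powr q"
      if yP: "y \<in> param_space T" and xL: "x \<in> levelmap T f g cbar y" and dx: "dist x xbar < \<epsilon>" for y x
    proof -
      obtain \<alpha> b where y: "y = (\<alpha>, b)" by (cases y)
      have bc: "continuous_on T b" using yP y unfolding param_space_def by simp
      define d where "d = param_dist T y ybar"
      have d: "d = max \<bar>\<alpha> - (f xbar + inner cbar xbar)\<bar> (supnorm T (\<lambda>t. b t - bbar t))"
        unfolding d_def param_dist_def y ybar_def by simp
      have bddb: "bdd_above (insert 0 ((\<lambda>t. \<bar>b t - bbar t\<bar>) ` T))"
      proof -
        have "continuous_on T (\<lambda>t. \<bar>b t - bbar t\<bar>)" using bc bcont by (auto intro!: continuous_intros)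
        hence "compact ((\<lambda>t. \<bar>b t - bbar t\<bar>) ` T)" using cT by (rule compact_continuous_image)
        hence "bdd_above ((\<lambda>t. \<bar>b t - bbar t\<bar>) ` T)" by (intro bounded_imp_bdd_above compact_imp_bounded)
        thus ?thesis by simp
      qed
      have phid: "\<phi> x \<le> d"
      proof -
        have "F x \<le> d" using xL Fe[of x] unfolding levelmap_def y d by auto
        moreover have "g t x - bbar t \<le> d" if t: "t \<in> T" for t
        proof -
          have "g t x - bbar t \<le> \<bar>b t - bbar t\<bar>" using xL t unfolding levelmap_def y by force
          also have "\<dots> \<le> supnorm T (\<lambda>t. b t - bbar t)"
            unfolding supnorm_def by (rule cSup_upper[OF _ bddb]) (use t in auto)
          finally show ?thesis unfolding d by simp
        qed
        ultimately show ?thesis using le by blast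
      qed
      show "\<tau> * infdist x (levelmap T f g cbar ybar) \<le> param_dist T y ybar powr q"
      proof (cases "\<phi> x > 0")
        case True
        have "\<tau> * infdist x (levelmap T f g cbar ybar) \<le> \<phi> x powr q" using EB[OF dx True] Sb by simp
        also have "\<dots> \<le> d powr q" using powr_mono2[of q "\<phi> x" d] q phid hnn[of x] by simp
        finally show ?thesis unfolding d_def .
      next
        case False
        hence "\<phi> x \<le> 0" by simp
        hence "infdist x (levelmap T f g cbar ybar) = 0" unfolding Sb by (simp add: infdist_zero)
        thus ?thesis by simp
      qed
    qed
    have "\<forall>y\<in>param_space T. param_dist T y ybar < 1 \<longrightarrow> (\<forall>x\<in>levelmap T f g cbar y. dist x xbar < \<epsilon> \<longrightarrow>
        \<tau> * infdist x (levelmap T f g cbar ybar) \<le> param_dist T y ybar powr q)" using key by blast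
    moreover have "(1::real) > 0" by simp
    ultimately show "q_order_calm (param_space T) (param_dist T) (levelmap T f g cbar) ybar xbar q"
      unfolding q_order_calm_def using t by blast
  qed
  have EB_L: "(\<exists>\<tau>>0. \<exists>\<epsilon>>0. \<forall>x. dist x xbar < \<epsilon> \<longrightarrow> 0 < \<phi> x \<longrightarrow> \<tau> * infdist x {x. \<phi> x \<le> 0} \<le> \<phi> x powr q)
     \<longleftrightarrow> Liminf (at xbar within {x. \<phi> x > 0}) (\<lambda>x. ereal (\<phi> x powr (q - 1) * infdist 0 (subdiff \<phi> x))) > 0"
  proof
    assume "\<exists>\<tau>>0. \<exists>\<epsilon>>0. \<forall>x. dist x xbar < \<epsilon> \<longrightarrow> 0 < \<phi> x \<longrightarrow> \<tau> * infdist x {x. \<phi> x \<le> 0} \<le> \<phi> x powr q"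
    then obtain \<tau> \<epsilon> where "\<tau> > 0" "\<epsilon> > 0"
      "\<And>x. dist x xbar < \<epsilon> \<Longrightarrow> 0 < \<phi> x \<Longrightarrow> \<tau> * infdist x {x. \<phi> x \<le> 0} \<le> \<phi> x powr q" by blast
    thus "Liminf (at xbar within {x. \<phi> x > 0}) (\<lambda>x. ereal (\<phi> x powr (q - 1) * infdist 0 (subdiff \<phi> x))) > 0"
      using slope_of_EB[OF conv hnn h0 q] by blast
  next
    assume "Liminf (at xbar within {x. \<phi> x > 0}) (\<lambda>x. ereal (\<phi> x powr (q - 1) * infdist 0 (subdiff \<phi> x))) > 0"
    from EB_of_slope[OF conv cont hnn h0 q this]
    show "\<exists>\<tau>>0. \<exists>\<epsilon>>0. \<forall>x. dist x xbar < \<epsilon> \<longrightarrow> 0 < \<phi> x \<longrightarrow> \<tau> * infdist x {x. \<phi> x \<le> 0} \<le> \<phi> x powr q"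
      by blast
  qed
  show ?thesis using EB_iff EB_L unfolding ybar_def \<phi>_def by simp
qed

end
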